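(* Let $s\ge 2$, $n=2s-1$, and let $A_1A_2\dots A_n$ be a polygon whose distinct vertices lie on a circle $\Gamma$, with vertex indices taken modulo $n$. For each $i\in\{1,\dots,n\}$, let $d_i$ be a line through $A_i$ meeting the line of the opposite side $A_{i+s-1}A_{i+s}$ in a single point $M_i\notin\{A_{i+s-1},A_{i+s}\}$, and let $M'_i$ be the second intersection point of $d_i$ with $\Gamma$. Then $$\prod_{i=1}^{n}\frac{|M_iA_{i+s-1}|}{|M_iA_{i+s}|}=\prod_{i=1}^{n}\frac{|M'_iA_{i+s-1}|}{|M'_iA_{i+s}|}.$$
   Context: $|XY|$ denotes the Euclidean distance between points $X$ and $Y$. *)

theory Defs
  imports "HOL-Analysis.Analysis"
begin

definition line_through :: "real^2 \<Rightarrow> real^2 \<Rightarrow> (real^2) set" where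
  "line_through p q = affine hull {p, q}"

end

theory Submission
  imports Defs
begin

lemma norm_sq_comb:
  fixes x y :: "'a::real_inner"
  shows "norm (a *\<^sub>R y - b *\<^sub>R x) = sqrt (a^2 * (y \<bullet> y) - 2*a*b*(x \<bullet> y) + b^2 * (x \<bullet> x))"
proof -
  have "norm (a *\<^sub>R y - b *\<^sub>R x) = sqrt ((a *\<^sub>R y - b *\<^sub>R x) \<bullet> (a *\<^sub>R y - b *\<^sub>R x))"
    by (simp add: norm_eq_sqrt_inner)
  also have "(a *\<^sub>R y - b *\<^sub>R x) \<bullet> (a *\<^sub>R y - b *\<^sub>R x) = a^2 * (y \<bullet> y) - 2*a*b*(x \<bullet> y) + b^2 * (x \<bullet> x)"
    by (simp add: inner_diff_left inner_diff_right inner_commute power2_eq_square algebra_simps)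
  finally show ?thesis .
qed

lemma alg:
  fixes x y :: "'a::real_inner"
  assumes x0: "x \<noteq> 0" and y0: "y \<noteq> 0" and q0: "q \<noteq> 0" and yx: "y \<noteq> x"
    and yx2: "y \<noteq> (q / (x \<bullet> x)) *\<^sub>R x"
  shows "norm x / norm ((q / (x \<bullet> x)) *\<^sub>R x)
    = norm ((q / (y \<bullet> y)) *\<^sub>R y - x) / norm ((q / (y \<bullet> y)) *\<^sub>R y - (q / (x \<bullet> x)) *\<^sub>R x)
      * (norm (y - x) / norm (y - (q / (x \<bullet> x)) *\<^sub>R x))"
proof -
  define X where "X = x \<bullet> x"
  define Y where "Y = y \<bullet> y"
  define k where "k = x \<bullet> y"
  have X0: "X > 0" using x0 by (simp add: X_def)
  have Y0: "Y > 0" using y0 by (simp add: Y_def)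
  define E2 where "E2 = (q/Y)^2 * Y - 2*(q/Y)*1*k + 1^2 * X"
  define E3 where "E3 = (q/Y)^2 * Y - 2*(q/Y)*(q/X)*k + (q/X)^2 * X"
  define E4 where "E4 = 1^2 * Y - 2*1*1*k + 1^2*X"
  define E5 where "E5 = 1^2 * Y - 2*1*(q/X)*k + (q/X)^2*X"
  have n1: "norm ((q / (y \<bullet> y)) *\<^sub>R y - x) = sqrt E2"
    using norm_sq_comb[of "q/Y" y 1 x] by (simp add: E2_def X_def Y_def k_def)
  have n2: "norm ((q / (y \<bullet> y)) *\<^sub>R y - (q / (x \<bullet> x)) *\<^sub>R x) = sqrt E3"
    using norm_sq_comb[of "q/Y" y "q/X" x] by (simp add: E3_def X_def Y_def k_def)
  have n3: "norm (y - x) = sqrt E4"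
    using norm_sq_comb[of 1 y 1 x] by (simp add: E4_def X_def Y_def k_def)
  have n4: "norm (y - (q / (x \<bullet> x)) *\<^sub>R x) = sqrt E5"
    using norm_sq_comb[of 1 y "q/X" x] by (simp add: E5_def X_def Y_def k_def)
  have n5: "norm x / norm ((q / (x \<bullet> x)) *\<^sub>R x) = sqrt (X / (q^2/X))"
    using X0 q0 by (simp add: X_def norm_eq_sqrt_inner real_sqrt_divide power2_eq_square)
  have E4nz: "E4 \<noteq> 0" using n3 yx by (metis real_sqrt_zero norm_eq_zero eq_iff_diff_eq_0)
  have E5nz: "E5 \<noteq> 0" using n4 yx2 by (metis real_sqrt_zero norm_eq_zero eq_iff_diff_eq_0)
  have E3e: "E3 = q^2 * E4 / (X*Y)" using X0 Y0 unfolding E3_def E4_def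
    by (simp add: field_simps power2_eq_square)
  have E5e: "E5 = E2 * Y / X" using X0 Y0 unfolding E2_def E5_def
    by (simp add: field_simps power2_eq_square)
  have E2nz: "E2 \<noteq> 0" using E5nz E5e by auto
  have "X / (q^2/X) = (E2 / E3) * (E4 / E5)"
    using X0 Y0 q0 E2nz E4nz unfolding E3e E5e by (simp add: field_simps power2_eq_square)
  then show ?thesis unfolding n1 n2 n3 n4 n5 by (simp add: real_sqrt_divide real_sqrt_mult)
qed
lemma inner_exp:
  fixes u v :: "'a::real_inner"
  shows "(u + t *\<^sub>R v) \<bullet> (u + t *\<^sub>R v) = u \<bullet> u + 2*t*(u \<bullet> v) + t^2 * (v \<bullet> v)"
  by (simp add: inner_add_left inner_add_right inner_commute power2_eq_square algebra_simps)

lemma sph: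
  fixes M c v :: "'a::real_inner"
  assumes "r \<ge> 0"
  shows "(M + t *\<^sub>R v \<in> sphere c r) \<longleftrightarrow>
     (M - c) \<bullet> (M - c) + 2*t*((M - c) \<bullet> v) + t^2 * (v \<bullet> v) = r^2"
proof -
  have "(M + t *\<^sub>R v \<in> sphere c r) \<longleftrightarrow> norm ((M - c) + t *\<^sub>R v) = r"
    by (simp add: dist_norm norm_minus_commute algebra_simps)
  also have "\<dots> \<longleftrightarrow> norm ((M - c) + t *\<^sub>R v)^2 = r^2"
    using assms by (metis norm_ge_zero power2_eq_iff_nonneg)
  also have "norm ((M - c) + t *\<^sub>R v)^2 = (M - c) \<bullet> (M - c) + 2*t*((M - c) \<bullet> v) + t^2 * (v \<bullet> v)"
    using inner_exp[of "M - c" t v] by (simp only: power2_norm_eq_inner)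
  finally show ?thesis .
qed

lemma key:
  fixes A B C M M' P c :: "real^2" and d :: "(real^2) set"
  assumes r0: "r > 0"
    and Ain: "A \<in> sphere c r" and Bin: "B \<in> sphere c r" and Cin: "C \<in> sphere c r"
    and AB: "A \<noteq> B" and AC: "A \<noteq> C" and BC: "B \<noteq> C"
    and PA: "P \<noteq> A" and dd: "d = line_through A P"
    and meet: "d \<inter> line_through B C = {M}" and MB: "M \<noteq> B" and MC: "M \<noteq> C"
    and sec: "d \<inter> sphere c r = {A, M'}"
  shows "dist M B / dist M C = dist M' B / dist M' C * (dist A B / dist A C)"
proof -
  have Ml: "M \<in> line_through B C" and Md: "M \<in> d" using meet by auto
  obtain s0 where s0: "M = B + s0 *\<^sub>R (C - B)"
    using Ml unfolding line_through_def affine_hull_2_alt by auto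
  have s00: "s0 \<noteq> 0" using MB s0 by auto
  have s01: "s0 \<noteq> 1" using MC s0 by auto
  define x where "x = B - M"
  define lam where "lam = (s0 - 1) / s0"
  have x0: "x \<noteq> 0" using MB by (simp add: x_def)
  have Bx: "B = M + 1 *\<^sub>R x" by (simp add: x_def)
  have Cx: "C = M + lam *\<^sub>R x"
  proof -
    have "x = - s0 *\<^sub>R (C - B)" using s0 by (simp add: x_def algebra_simps)
    then have "lam *\<^sub>R x = (lam * - s0) *\<^sub>R (C - B)" by simp
    moreover have "lam * - s0 = 1 - s0" using s00 by (simp add: lam_def field_simps)
    ultimately have "lam *\<^sub>R x = (1 - s0) *\<^sub>R (C - B)" by metis
    moreover have "C - M = (1 - s0) *\<^sub>R (C - B)" using s0 by (simp add: algebra_simps)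
    ultimately have "C - M = lam *\<^sub>R x" by simp
    then show ?thesis by (metis add_diff_cancel_left' diff_add_cancel add.commute)
  qed
  have lam0: "lam \<noteq> 0" using s01 s00 by (simp add: lam_def)
  have lam1: "lam \<noteq> 1" using BC Bx Cx by auto
  define u where "u = M - c"
  define q where "q = u \<bullet> u - r^2"
  have E1: "u \<bullet> u + 2*1*(u \<bullet> x) + 1^2 * (x \<bullet> x) = r^2"
    using Bin Bx sph[of r M 1 x c] r0 by (simp add: u_def)
  have E2: "u \<bullet> u + 2*lam*(u \<bullet> x) + lam^2 * (x \<bullet> x) = r^2"
    using Cin Cx sph[of r M lam x c] r0 by (simp add: u_def)
  have "(1 - lam) * (2 * (u \<bullet> x) + (1 + lam) * (x \<bullet> x)) = 0"
    using E1 E2 by (simp add: algebra_simps power2_eq_square)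
  then have F: "2 * (u \<bullet> x) + (1 + lam) * (x \<bullet> x) = 0" using lam1 by simp
  have lq: "lam * (x \<bullet> x) = q" using E1 F by (simp add: q_def algebra_simps)
  have xx0: "x \<bullet> x > 0" using x0 by simp
  have q0: "q \<noteq> 0" using lq lam0 xx0 by auto
  have lamq: "lam = q / (x \<bullet> x)" using lq xx0 by (simp add: field_simps)
  have dr: "d = range (\<lambda>t. A + t *\<^sub>R (P - A))"
    unfolding dd line_through_def affine_hull_2_alt by simp
  obtain m0 where m0: "M = A + m0 *\<^sub>R (P - A)" using Md dr by auto
  have MA: "M \<noteq> A"
  proof
    assume "M = A"
    then have "M \<in> sphere c r" using Ain by simp
    then have "q = 0" using sph[of r M 0 x c] r0 by (simp add: q_def u_def)
    then show False using q0 by simp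
  qed
  have m00: "m0 \<noteq> 0" using MA m0 by auto
  define y where "y = A - M"
  have y0: "y \<noteq> 0" using MA by (simp add: y_def)
  have yPA: "y = (- m0) *\<^sub>R (P - A)" using m0 by (simp add: y_def)
  have ind: "M + t *\<^sub>R y \<in> d" for t
  proof -
    have "t *\<^sub>R y = (- (t * m0)) *\<^sub>R (P - A)" using yPA by simp
    then have "M + t *\<^sub>R y = A + m0 *\<^sub>R (P - A) + (- (t * m0)) *\<^sub>R (P - A)"
      using m0 by simp
    also have "\<dots> = A + (m0 - t * m0) *\<^sub>R (P - A)" by (simp add: scaleR_left_diff_distrib)
    finally have "M + t *\<^sub>R y = A + (m0 - t * m0) *\<^sub>R (P - A)" .
    then show ?thesis using dr by auto
  qed
  have Ay: "A = M + 1 *\<^sub>R y" by (simp add: y_def)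
  have G1: "u \<bullet> u + 2*1*(u \<bullet> y) + 1^2 * (y \<bullet> y) = r^2"
    using Ain Ay sph[of r M 1 y c] r0 by (simp add: u_def)
  have yy0: "y \<bullet> y > 0" using y0 by simp
  have root: "M + t *\<^sub>R y \<in> sphere c r \<longleftrightarrow> (t - 1) * (t * (y \<bullet> y) - q) = 0" for t
  proof -
    have "M + t *\<^sub>R y \<in> sphere c r \<longleftrightarrow> u \<bullet> u + 2*t*(u \<bullet> y) + t^2 * (y \<bullet> y) = r^2"
      using sph[of r M t y c] r0 by (simp add: u_def)
    also have "\<dots> \<longleftrightarrow> (t - 1) * (t * (y \<bullet> y) - q) = 0"
    proof -
      have "u \<bullet> u + 2*t*(u \<bullet> y) + t^2 * (y \<bullet> y) - r^2 - (t - 1) * (t * (y \<bullet> y) - q)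
         = t * (u \<bullet> u + 2*1*(u \<bullet> y) + 1^2 * (y \<bullet> y) - r^2)"
        by (simp add: q_def algebra_simps power2_eq_square)
      then have "u \<bullet> u + 2*t*(u \<bullet> y) + t^2 * (y \<bullet> y) - r^2 = (t - 1) * (t * (y \<bullet> y) - q)"
        using G1 by simp
      then show ?thesis by (metis eq_iff_diff_eq_0)
    qed
    finally show ?thesis .
  qed
  define t where "t = q / (y \<bullet> y)"
  have Zs: "M + t *\<^sub>R y \<in> sphere c r" using root[of t] yy0 by (simp add: t_def)
  have Zin: "M + t *\<^sub>R y \<in> {A, M'}" using Zs ind[of t] sec by blast
  have M'in: "M' \<in> d" "M' \<in> sphere c r" using sec by auto
  obtain m1 where m1: "M' = A + m1 *\<^sub>R (P - A)" using M'in(1) dr by auto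
  define a' where "a' = (m0 - m1) / m0"
  have M'y: "M' = M + a' *\<^sub>R y"
  proof -
    have "a' *\<^sub>R y = (a' * - m0) *\<^sub>R (P - A)" using yPA by simp
    moreover have "a' * - m0 = m1 - m0" using m00 by (simp add: a'_def field_simps)
    ultimately have "a' *\<^sub>R y = (m1 - m0) *\<^sub>R (P - A)" by metis
    then have "M + a' *\<^sub>R y = A + m0 *\<^sub>R (P - A) + (m1 - m0) *\<^sub>R (P - A)" using m0 by simp
    also have "\<dots> = A + m1 *\<^sub>R (P - A)" by (simp add: scaleR_left_diff_distrib)
    finally show ?thesis using m1 by simp
  qed
  have "(a' - 1) * (a' * (y \<bullet> y) - q) = 0" using root[of a'] M'in(2) M'y by simp
  then have "a' - 1 = 0 \<or> a' * (y \<bullet> y) - q = 0" by simp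
  then have M'eq: "M' = M + t *\<^sub>R y"
  proof
    assume "a' - 1 = 0"
    then have "M' = A" using M'y Ay by simp
    then show ?thesis using Zin by auto
  next
    assume "a' * (y \<bullet> y) - q = 0"
    then have "a' = t" using yy0 by (simp add: t_def field_simps)
    then show ?thesis using M'y by simp
  qed
  have yx: "y \<noteq> x" using AB Ay Bx by auto
  have yx2: "y \<noteq> (q / (x \<bullet> x)) *\<^sub>R x" using AC Ay Cx lamq by auto
  have "norm x / norm ((q / (x \<bullet> x)) *\<^sub>R x)
    = norm ((q / (y \<bullet> y)) *\<^sub>R y - x) / norm ((q / (y \<bullet> y)) *\<^sub>R y - (q / (x \<bullet> x)) *\<^sub>R x)
      * (norm (y - x) / norm (y - (q / (x \<bullet> x)) *\<^sub>R x))"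
    by (rule alg[OF x0 y0 q0 yx yx2])
  moreover have "dist M B = norm x" "dist M C = norm ((q / (x \<bullet> x)) *\<^sub>R x)"
    "dist M' B = norm ((q / (y \<bullet> y)) *\<^sub>R y - x)"
    "dist M' C = norm ((q / (y \<bullet> y)) *\<^sub>R y - (q / (x \<bullet> x)) *\<^sub>R x)"
    "dist A B = norm (y - x)" "dist A C = norm (y - (q / (x \<bullet> x)) *\<^sub>R x)"
    using Bx Cx M'eq Ay lamq by (simp_all add: dist_norm norm_minus_commute t_def)
  ultimately show ?thesis by simp
qed
lemma modlt: "(a::nat) < 2*n \<Longrightarrow> a mod n = (if a < n then a else a - n)"
  by (simp add: mod_if le_mod_geq)

theorem mainTheorem5:
  fixes s n :: nat and c :: "real^2" and r :: real
    and A M M' :: "nat \<Rightarrow> real^2" and d :: "nat \<Rightarrow> (real^2) set"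
  assumes s2: "s \<ge> 2"
    and n_def: "n = 2 * s - 1"
    and r_pos: "r > 0"
    and on_circle: "\<forall>i<n. A i \<in> sphere c r"
    and distinct: "inj_on A {..<n}"
    and d_line: "\<forall>i<n. \<exists>P. P \<noteq> A i \<and> d i = line_through (A i) P"
    and M_meet: "\<forall>i<n. d i \<inter> line_through (A ((i + s - 1) mod n)) (A ((i + s) mod n)) = {M i}"
    and M_not: "\<forall>i<n. M i \<noteq> A ((i + s - 1) mod n) \<and> M i \<noteq> A ((i + s) mod n)"
    and M'_second: "\<forall>i<n. d i \<inter> sphere c r = {A i, M' i}"
  shows "(\<Prod>i<n. dist (M i) (A ((i + s - 1) mod n)) / dist (M i) (A ((i + s) mod n)))
       = (\<Prod>i<n. dist (M' i) (A ((i + s - 1) mod n)) / dist (M' i) (A ((i + s) mod n)))"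
proof -
  define b where "b i = (i + s - 1) mod n" for i
  define e where "e i = (i + s) mod n" for i
  have bf: "b i = (if i + s - 1 < n then i + s - 1 else i + s - 1 - n)" if "i < n" for i
    unfolding b_def using that s2 n_def by (intro modlt) simp
  have ef: "e i = (if i + s < n then i + s else i + s - n)" if "i < n" for i
    unfolding e_def using that s2 n_def by (intro modlt) simp
  have idx: "b i < n \<and> e i < n \<and> b i \<noteq> i \<and> e i \<noteq> i \<and> b i \<noteq> e i \<and> b (e i) = i" if "i < n" for i
  proof -
    have "e i < n" using ef[OF that] that s2 n_def by auto
    then have "b (e i) = i" using bf[of "e i"] ef[OF that] that s2 n_def by auto
    then show ?thesis using bf[OF that] ef[OF that] that s2 n_def by (auto split: if_splits; arith)
  qed
  have Adist: "A i \<noteq> A j" if "i < n" "j < n" "i \<noteq> j" for i j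
    using distinct that by (meson inj_on_eq_iff lessThan_iff)
  have each: "dist (M i) (A (b i)) / dist (M i) (A (e i))
     = dist (M' i) (A (b i)) / dist (M' i) (A (e i)) * (dist (A i) (A (b i)) / dist (A i) (A (e i)))"
    if i: "i < n" for i
  proof -
    obtain P where P: "P \<noteq> A i" "d i = line_through (A i) P" using d_line i by blast
    show ?thesis
    proof (rule key[OF r_pos _ _ _ _ _ _ P(1) P(2)])
      show "A i \<in> sphere c r" "A (b i) \<in> sphere c r" "A (e i) \<in> sphere c r"
        using on_circle i idx[OF i] by auto
      show "A i \<noteq> A (b i)" "A i \<noteq> A (e i)" "A (b i) \<noteq> A (e i)"
        using Adist idx[OF i] i by auto
      show "d i \<inter> line_through (A (b i)) (A (e i)) = {M i}"
        "M i \<noteq> A (b i)" "M i \<noteq> A (e i)" "d i \<inter> sphere c r = {A i, M' i}"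
        using M_meet M_not M'_second i unfolding b_def e_def by auto
    qed
  qed
  have inje: "inj_on e {..<n}"
  proof (rule inj_onI)
    fix i j assume "i \<in> {..<n}" "j \<in> {..<n}" "e i = e j"
    then show "i = j" using ef[of i] ef[of j] s2 n_def by (auto split: if_splits)
  qed
  have ime: "e ` {..<n} = {..<n}"
    by (rule endo_inj_surj) (use inje idx in auto)
  have num_den: "(\<Prod>i<n. dist (A i) (A (b i))) = (\<Prod>i<n. dist (A i) (A (e i)))"
  proof -
    have "(\<Prod>i<n. dist (A i) (A (b i))) = (\<Prod>i\<in>e ` {..<n}. dist (A i) (A (b i)))"
      using ime by simp
    also have "\<dots> = (\<Prod>i<n. dist (A (e i)) (A (b (e i))))"
      using prod.reindex[OF inje] by simp
    also have "\<dots> = (\<Prod>i<n. dist (A i) (A (e i)))"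
      by (rule prod.cong) (auto simp: idx dist_commute)
    finally show ?thesis .
  qed
  have ne: "A a \<noteq> A (e a)" if "a < n" for a using Adist[of a "e a"] idx[OF that] that by auto
  have den0: "(\<Prod>i<n. dist (A i) (A (e i))) \<noteq> 0"
    using ne by (simp add: prod_zero_iff)
  have h1: "(\<Prod>i<n. dist (A i) (A (b i)) / dist (A i) (A (e i))) = 1"
    using num_den den0 by (simp add: prod_dividef)
  have "(\<Prod>i<n. dist (M i) (A (b i)) / dist (M i) (A (e i)))
     = (\<Prod>i<n. dist (M' i) (A (b i)) / dist (M' i) (A (e i)) * (dist (A i) (A (b i)) / dist (A i) (A (e i))))"
    by (rule prod.cong) (auto simp: each)
  also have "\<dots> = (\<Prod>i<n. dist (M' i) (A (b i)) / dist (M' i) (A (e i)))"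
    using h1 by (simp only: prod.distrib mult_1_right)
  finally show ?thesis unfolding b_def e_def .
qed
end
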